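(* Let $n\ge2$. The semigroup $(S_n,\cdot)$ does not satisfy the identity $v_n=v_n'$, where $v_n:=\bigl(x_1x_2\cdots x_{2n}\cdot x_nx_{n-1}\cdots x_1\cdot x_{n+1}x_{n+2}\cdots x_{2n}\bigr)\cdot x_1x_2\cdots x_n$ and $v_n':=\bigl(x_1x_2\cdots x_{2n}\cdot x_nx_{n-1}\cdots x_1\cdot x_{n+1}x_{n+2}\cdots x_{2n}\bigr)^2\cdot x_1x_2\cdots x_n$.
   Context: For $n\ge2$, $S_n$ is the semigroup of partial one-to-one transformations of $\{0,1,\dots,3n+2\}$ (acting on the right, composition $x(\alpha\beta)=(x\alpha)\beta$) that is the inverse semigroup (closed under composition and taking inverse partial maps) generated by $\chi:\ n\mapsto 2n+1,\ n+1\mapsto 2n+2$ and, for $i=1,\dots,n$, $\chi_i:\ i-1\mapsto i,\ n+1+i\mapsto n+i,\ 2n+1+i\mapsto 2n+2+i$ (each undefined elsewhere). *)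

theory Defs
  imports Main
begin

text \<open>Partial transformations of nat are modelled as maps nat \<rightharpoonup> nat.
  Transformations act on the right: x(a b) = (x a) b, so the product a b is
  the map composition of b after a.\<close>

definition pmul :: "(nat \<rightharpoonup> nat) \<Rightarrow> (nat \<rightharpoonup> nat) \<Rightarrow> (nat \<rightharpoonup> nat)" where
  "pmul a b = b \<circ>\<^sub>m a"

definition pinv :: "(nat \<rightharpoonup> nat) \<Rightarrow> (nat \<rightharpoonup> nat)" where
  "pinv f = (\<lambda>y. if \<exists>x. f x = Some y then Some (THE x. f x = Some y) else None)"

definition chi :: "nat \<Rightarrow> (nat \<rightharpoonup> nat)" where
  "chi n = Map.empty(n \<mapsto> 2*n+1, n+1 \<mapsto> 2*n+2)"

definition chi_i :: "nat \<Rightarrow> nat \<Rightarrow> (nat \<rightharpoonup> nat)" where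
  "chi_i n i = Map.empty(i-1 \<mapsto> i, n+1+i \<mapsto> n+i, 2*n+1+i \<mapsto> 2*n+2+i)"

inductive_set S :: "nat \<Rightarrow> (nat \<rightharpoonup> nat) set" for n :: nat where
  gen_chi: "chi n \<in> S n"
| gen_chi_i: "1 \<le> i \<Longrightarrow> i \<le> n \<Longrightarrow> chi_i n i \<in> S n"
| mult: "a \<in> S n \<Longrightarrow> b \<in> S n \<Longrightarrow> pmul a b \<in> S n"
| inv: "a \<in> S n \<Longrightarrow> pinv a \<in> S n"

fun wprod :: "(nat \<rightharpoonup> nat) list \<Rightarrow> (nat \<rightharpoonup> nat)" where
  "wprod [] = Some"
| "wprod (a # as) = foldl pmul a as"

definition weval :: "(nat \<Rightarrow> (nat \<rightharpoonup> nat)) \<Rightarrow> nat list \<Rightarrow> (nat \<rightharpoonup> nat)" where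
  "weval x w = wprod (map x w)"

definition wbase :: "nat \<Rightarrow> nat list" where
  "wbase n = [1..<2*n+1] @ rev [1..<n+1] @ [n+1..<2*n+1]"

definition v_word :: "nat \<Rightarrow> nat list" where
  "v_word n = wbase n @ [1..<n+1]"

definition v'_word :: "nat \<Rightarrow> nat list" where
  "v'_word n = wbase n @ wbase n @ [1..<n+1]"

end

theory Submission
  imports Defs
begin

fun ev :: "(nat \<rightharpoonup> nat) list \<Rightarrow> nat \<Rightarrow> nat option" where
  "ev [] p = Some p"
| "ev (a # as) p = (case a p of None \<Rightarrow> None | Some q \<Rightarrow> ev as q)"

lemma foldl_ev: "foldl pmul c as = (\<lambda>p. case c p of None \<Rightarrow> None | Some q \<Rightarrow> ev as q)"
proof (induction as arbitrary: c)
  case Nil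
  then show ?case by (auto intro!: ext split: option.splits)
next
  case (Cons a as)
  show ?case by (simp only: foldl_Cons Cons.IH) (auto simp: pmul_def map_comp_def intro!: ext split: option.splits)
qed

lemma weval_ev: "w \<noteq> [] \<Longrightarrow> weval x w = ev (map x w)"
  by (cases w) (auto simp: weval_def foldl_ev intro!: ext split: option.splits)

lemma ev_append: "ev (as @ bs) p = (case ev as p of None \<Rightarrow> None | Some q \<Rightarrow> ev bs q)"
  by (induction as arbitrary: p) (auto split: option.splits)

lemma chainA: "1 \<le> i \<Longrightarrow> i \<le> j \<Longrightarrow> ev (map (chi_i n) [i..<j]) (i-1) = Some (j-1)"
proof (induction j)
  case 0 then show ?case by simp
next
  case (Suc j)
  show ?case
  proof (cases "i = Suc j")
    case True then show ?thesis by simp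
  next
    case False
    then have "i \<le> j" using Suc by simp
    then show ?thesis using Suc by (auto simp: ev_append chi_i_def)
  qed
qed

lemma chainA2: "1 \<le> i \<Longrightarrow> i \<le> j \<Longrightarrow> ev (map (chi_i n) [i..<j]) (2*n+1+i) = Some (2*n+1+j)"
proof (induction j)
  case 0 then show ?case by simp
next
  case (Suc j)
  show ?case
  proof (cases "i = Suc j")
    case True then show ?thesis by simp
  next
    case False
    then have "i \<le> j" using Suc by simp
    then show ?thesis using Suc by (auto simp: ev_append chi_i_def)
  qed
qed

lemma chainC: "1 \<le> n \<Longrightarrow> 1 \<le> i \<Longrightarrow> i \<le> j \<Longrightarrow> ev (map (chi_i n) (rev [i..<j])) (n+j) = Some (n+i)"
proof (induction j)
  case 0 then show ?case by simp
next
  case (Suc j)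
  show ?case
  proof (cases "i = Suc j")
    case True then show ?thesis by simp
  next
    case False
    then have "i \<le> j" using Suc by simp
    then show ?thesis using Suc by (auto simp: chi_i_def)
  qed
qed

lemma ev_fix: "(\<forall>a\<in>set as. a q = Some q) \<Longrightarrow> ev as q = Some q"
  by (induction as) auto

lemma pinv_chi: "pinv (chi n) (2*n+1) = Some n" "pinv (chi n) (2*n+2) = Some (n+1)"
proof -
  have "(THE x. chi n x = Some (2*n+1)) = n"
    by (rule the_equality) (auto simp: chi_def split: if_splits)
  moreover have "chi n n = Some (2*n+1)" by (simp add: chi_def)
  ultimately show "pinv (chi n) (2*n+1) = Some n"
    unfolding pinv_def by auto
  have "(THE x. chi n x = Some (2*n+2)) = n+1"
    by (rule the_equality) (auto simp: chi_def split: if_splits)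
  moreover have "chi n (n+1) = Some (2*n+2)" by (simp add: chi_def)
  ultimately show "pinv (chi n) (2*n+2) = Some (n+1)"
    unfolding pinv_def by auto
qed

theorem proposition5p3:
  fixes n :: nat
  assumes "n \<ge> 2"
  shows "\<exists>x :: nat \<Rightarrow> (nat \<rightharpoonup> nat).
           (\<forall>i\<in>{1..2*n}. x i \<in> S n) \<and> weval x (v_word n) \<noteq> weval x (v'_word n)"
proof -
  define e where "e = pmul (pinv (chi n)) (chi n)"
  define x where "x = (\<lambda>i. if i \<le> n then chi_i n i else if i = n+1 then chi n else e)"
  have eS: "e \<in> S n" unfolding e_def by (intro S.mult S.inv S.gen_chi)
  have xS: "\<forall>i\<in>{1..2*n}. x i \<in> S n"
    using eS by (auto simp: x_def intro: S.gen_chi S.gen_chi_i)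
  have e1: "e (2*n+1) = Some (2*n+1)" "e (2*n+2) = Some (2*n+2)"
    unfolding e_def pmul_def map_comp_def pinv_chi by (auto simp: chi_def)
  define A where "A = map x [1..<n+1]"
  define B where "B = map x [n+1..<2*n+1]"
  define C where "C = map x (rev [1..<n+1])"
  have Aeq: "A = map (chi_i n) [1..<n+1]" unfolding A_def x_def by simp
  have Ceq: "C = map (chi_i n) (rev [1..<n+1])" unfolding C_def x_def by simp
  have Beq: "B = chi n # map (\<lambda>_. e) [n+2..<2*n+1]"
  proof -
    have "[n+1..<2*n+1] = (n+1) # [n+2..<2*n+1]" using assms by (simp add: upt_conv_Cons)
    moreover have "map x [n+2..<2*n+1] = map (\<lambda>_. e) [n+2..<2*n+1]"
      by (rule map_cong) (auto simp: x_def)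
    moreover have "x (n+1) = chi n" by (simp add: x_def)
    ultimately show ?thesis unfolding B_def by (simp only: list.map)
  qed
  have A0: "ev A 0 = Some n" using chainA[of 1 "n+1" n] assms by (simp add: Aeq)
  have A2: "ev A (2*n+2) = Some (3*n+2)" using chainA2[of 1 "n+1" n] assms by (simp add: Aeq)
  have C0: "ev C (2*n+1) = Some (n+1)" using chainC[of n 1 "n+1"] assms
    by (simp add: Ceq mult_2 del: rev.simps upt_Suc)
  have fixes1: "ev (map (\<lambda>_. e) [n+2..<2*n+1]) (2*n+1) = Some (2*n+1)"
    by (rule ev_fix) (use e1 in simp)
  have fixes2: "ev (map (\<lambda>_. e) [n+2..<2*n+1]) (2*n+2) = Some (2*n+2)"
    by (rule ev_fix) (use e1 in simp)
  have B0: "ev B n = Some (2*n+1)" using fixes1 by (simp add: Beq chi_def)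
  have B1: "ev B (n+1) = Some (2*n+2)" using fixes2 by (simp add: Beq chi_def)
  have B2: "ev B (3*n+2) = None" by (simp add: Beq chi_def)
  have upsplit: "[1..<2*n+1] = [1..<n+1] @ [n+1..<2*n+1]"
  proof -
    have "2*n+1 = (n+1)+n" by simp
    moreover have "[1..<(n+1)+n] = [1..<n+1] @ [n+1..<(n+1)+n]"
      by (rule upt_add_eq_append) simp
    ultimately show ?thesis by (simp only:)
  qed
  have vw: "map x (v_word n) = A @ B @ C @ B @ A"
    using upsplit by (simp add: v_word_def wbase_def A_def B_def C_def del: upt_Suc)
  have vw': "map x (v'_word n) = A @ B @ C @ B @ A @ B @ C @ B @ A"
    using upsplit by (simp add: v'_word_def wbase_def A_def B_def C_def del: upt_Suc)
  have ne: "v_word n \<noteq> []" "v'_word n \<noteq> []" using assms by (simp_all add: v_word_def v'_word_def wbase_def)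
  have "weval x (v_word n) 0 = Some (3*n+2)"
    unfolding weval_ev[OF ne(1)] vw ev_append A0 B0 C0 B1 A2 option.case by (rule refl)
  moreover have "weval x (v'_word n) 0 = None"
    unfolding weval_ev[OF ne(2)] vw' ev_append A0 B0 C0 B1 A2 B2 option.case by (rule refl)
  ultimately show ?thesis using xS by (intro exI[of _ x]) auto
qed

end
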